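(* Let $h,\Gamma,\rho_0$ be $C^2$ functions on the circle $\mathbb{T}^1$ with $h>0$, $\Gamma>0$ everywhere and $\rho_0 = c/h$ for a constant $c>0$. For $\epsilon>0$ let $r_\epsilon$ be a $C^2$ solution of $$\frac{\epsilon}{2}(\Gamma r_\epsilon)'' - (h r_\epsilon)' = -\frac{\epsilon}{2}(\Gamma\rho_0)'' \quad\text{on } \mathbb{T}^1,\qquad \int_{\mathbb{T}^1} r_\epsilon\,dx = 0.$$ Then there exist $\epsilon_0>0$ and a constant $C$ (depending only on $h,\Gamma,\rho_0$) such that $\|r_\epsilon'\|_{L^2(\mathbb{T}^1)}\le C\epsilon$ for all $0<\epsilon<\epsilon_0$. Explicitly, with $\alpha=\min h$ and, if $\Gamma$ is nonconstant, $\beta = \max\big(|h'| + \frac{\alpha}{3\max\Gamma'}|\Gamma''|\big)$ (and $\beta=\max|h'|$ if $\Gamma$ is constant), one has for $0<\epsilon<2\alpha/(3\max\Gamma')$ (all $\epsilon>0$ if $\Gamma$ is constant) $$\|r_\epsilon'\|_{L^2}\le \epsilon\Big(\frac{2\beta}{\alpha^2}\|(\Gamma\rho_0)'\|_{L^2} + \frac{1}{\alpha}\|(\Gamma\rho_0)''\|_{L^2}\Big).$$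
   Context: Here $r_\epsilon=\rho_\epsilon-\rho_0$, where $\rho_0=c/h$ is the invariant density of $\dot x=h(x)$ on the circle and $\rho_\epsilon$ the stationary density of $dx = h\,dt+\sqrt\epsilon\,\gamma(x)\circ dW$ with $\Gamma=\gamma^2$. Primes denote derivatives on $\mathbb{T}^1$. *)

theory Defs
  imports "HOL-Analysis.Analysis"
begin

text \<open>The circle T^1 is modelled as R/Z: functions on T^1 are 1-periodic functions
  real \<Rightarrow> real, and integrals over T^1 are integrals over [0,1].\<close>

definition periodic1 :: "(real \<Rightarrow> real) \<Rightarrow> bool" where
  "periodic1 f \<longleftrightarrow> (\<forall>x. f (x + 1) = f x)"

definition C2_circle :: "(real \<Rightarrow> real) \<Rightarrow> bool" where
  "C2_circle f \<longleftrightarrow> periodic1 f \<and> (\<forall>x. f differentiable (at x))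
     \<and> (\<forall>x. deriv f differentiable (at x)) \<and> continuous_on UNIV (deriv (deriv f))"

definition L2norm :: "(real \<Rightarrow> real) \<Rightarrow> real" where
  "L2norm f = sqrt (integral {0..1} (\<lambda>x. (f x)\<^sup>2))"

end

theory Submission imports Defs begin

lemma ftc_per:
  fixes u u' :: "real \<Rightarrow> real"
  assumes "\<And>x. (u has_real_derivative u' x) (at x)" "u 1 = u 0"
  shows "(u' has_integral 0) {0..1}"
proof -
  have "(u' has_integral (u 1 - u 0)) {0..1}"
    apply (rule fundamental_theorem_of_calculus)
    using assms(1) by (auto simp: has_real_derivative_iff_has_vector_derivative[symmetric]
        intro: has_field_derivative_at_within)
  thus ?thesis using assms(2) by simp
qed

lemma cs_int:
  fixes f g :: "real \<Rightarrow> real"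
  assumes f: "continuous_on {0..1} f" and g: "continuous_on {0..1} g"
  shows "integral {0..1} (\<lambda>x. f x * g x) \<le> L2norm f * L2norm g"
proof -
  define A where "A = integral {0..1} (\<lambda>x. (f x)\<^sup>2)"
  define B where "B = integral {0..1} (\<lambda>x. f x * g x)"
  define C where "C = integral {0..1} (\<lambda>x. (g x)\<^sup>2)"
  have iA: "(\<lambda>x. (f x)\<^sup>2) integrable_on {0..1}"
    by (intro integrable_continuous_interval continuous_intros f)
  have iB: "(\<lambda>x. f x * g x) integrable_on {0..1}"
    by (intro integrable_continuous_interval continuous_intros f g)
  have iC: "(\<lambda>x. (g x)\<^sup>2) integrable_on {0..1}"
    by (intro integrable_continuous_interval continuous_intros g)
  have A0: "A \<ge> 0" unfolding A_def by (rule integral_nonneg[OF iA]) auto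
  have C0: "C \<ge> 0" unfolding C_def by (rule integral_nonneg[OF iC]) auto
  have key: "B \<le> (t * A + C / t) / 2" if t: "t > 0" for t
  proof -
    have pw: "f x * g x \<le> (t * (f x)\<^sup>2 + (g x)\<^sup>2 / t) / 2" for x
    proof -
      have "0 \<le> (t * f x - g x)\<^sup>2" by simp
      hence "2 * t * (f x * g x) \<le> t * (t * (f x)\<^sup>2) + (g x)\<^sup>2"
        by (simp add: power2_eq_square algebra_simps)
      moreover have "f x * g x \<le> (t * (f x)\<^sup>2 + (g x)\<^sup>2 / t) / 2 \<longleftrightarrow> 2 * t * (f x * g x) \<le> t * (t * (f x)\<^sup>2) + (g x)\<^sup>2"
        using t by (simp add: field_simps power2_eq_square)
      ultimately show ?thesis by simp
    qed
    have "B \<le> integral {0..1} (\<lambda>x. (t * (f x)\<^sup>2 + (g x)\<^sup>2 / t) / 2)"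
      unfolding B_def
    proof (rule integral_le[OF iB])
      show "(\<lambda>x. (t * (f x)\<^sup>2 + (g x)\<^sup>2 / t) / 2) integrable_on {0..1}"
        using t by (intro integrable_continuous_interval continuous_intros f g) auto
    qed (rule pw)
    also have "\<dots> = (t * A + C / t) / 2"
    proof -
      have "((\<lambda>x. (t * (f x)\<^sup>2 + (g x)\<^sup>2 / t) / 2) has_integral (t * A + C / t) / 2) {0..1}"
        unfolding A_def C_def
        by (intro has_integral_divide has_integral_add has_integral_mult_right integrable_integral iA iC)
      thus ?thesis by (rule integral_unique)
    qed
    finally show ?thesis .
  qed
  have "B \<le> sqrt A * sqrt C"
  proof (cases "A > 0 \<and> C > 0")
    case True
    have "B \<le> ((sqrt C / sqrt A) * A + C / (sqrt C / sqrt A)) / 2"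
      using True by (intro key) auto
    also have "\<dots> = sqrt A * sqrt C"
      using True by (simp add: field_simps)
    finally show ?thesis .
  next
    case False
    show ?thesis
    proof (rule ccontr)
      assume nb: "\<not> B \<le> sqrt A * sqrt C"
      from False A0 C0 have "A = 0 \<or> C = 0" by auto
      hence "sqrt A * sqrt C = 0" by auto
      with nb have Bp: "B > 0" by auto
      from False A0 C0 consider "A = 0" | "C = 0" by auto
      thus False
      proof cases
        case 1
        have "B \<le> ((C+1)/B * A + C / ((C+1)/B)) / 2" using Bp C0 by (intro key) auto
        also have "\<dots> = B * (C / (C+1)) / 2" using 1 Bp C0 by (simp add: field_simps)
        also have "\<dots> < B" using Bp C0 mult_nonneg_nonneg[of B C] by (simp add: field_simps) (simp add: add_nonneg_pos)
        finally show False by simp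
      next
        case 2
        have "B \<le> (B/(A+1) * A + C / (B/(A+1))) / 2" using Bp A0 by (intro key) auto
        also have "\<dots> = B * (A / (A+1)) / 2" using 2 Bp A0 by (simp add: field_simps)
        also have "\<dots> < B" using Bp A0 mult_nonneg_nonneg[of B A] by (simp add: field_simps) (simp add: add_nonneg_pos)
        finally show False by simp
      qed
    qed
  qed
  thus ?thesis unfolding L2norm_def A_def B_def C_def .
qed

lemma deriv_cont: "(\<And>x. (f has_real_derivative f' x) (at x)) \<Longrightarrow> continuous_on S f"
  by (meson DERIV_isCont continuous_at_imp_continuous_on)

lemma L2_nonneg: "L2norm f \<ge> 0"
proof -
  have "integral {0..1} (\<lambda>x. (f x)\<^sup>2) \<ge> 0"
  proof (cases "(\<lambda>x. (f x)\<^sup>2) integrable_on {0..1}")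
    case True thus ?thesis by (rule integral_nonneg) auto
  qed (simp add: not_integrable_integral)
  thus ?thesis unfolding L2norm_def by simp
qed

lemma core:
  fixes G G1 G2 r r1 r2 h h1 f1 f2 :: "real \<Rightarrow> real" and \<epsilon> \<alpha> \<beta> :: real
  assumes dG: "\<And>x. (G has_real_derivative G1 x) (at x)"
    and dG1: "\<And>x. (G1 has_real_derivative G2 x) (at x)" and cG2: "continuous_on UNIV G2"
    and dr: "\<And>x. (r has_real_derivative r1 x) (at x)"
    and dr1: "\<And>x. (r1 has_real_derivative r2 x) (at x)" and cr2: "continuous_on UNIV r2"
    and dh: "\<And>x. (h has_real_derivative h1 x) (at x)" and ch1: "continuous_on UNIV h1"
    and df: "\<And>x. (f1 has_real_derivative f2 x) (at x)" and cf2: "continuous_on UNIV f2"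
    and pG: "G 1 = G 0" and pr: "r 1 = r 0" and pr1: "r1 1 = r1 0"
    and eps: "\<epsilon> > 0" and alpha: "\<alpha> > 0" and hal: "\<And>x. x \<in> {0..1} \<Longrightarrow> \<alpha> \<le> h x"
    and GM: "\<And>x. x \<in> {0..1} \<Longrightarrow> \<epsilon> * G1 x \<le> 2 * \<alpha> / 3"
    and bet: "\<And>x. x \<in> {0..1} \<Longrightarrow> \<bar>\<epsilon>/2 * G2 x - h1 x\<bar> \<le> \<beta>"
    and int0: "integral {0..1} r = 0"
    and eq: "\<And>x. (\<epsilon>/2) * (G2 x * r x + 2 * G1 x * r1 x + G x * r2 x) - (h1 x * r x + h x * r1 x)
               = - (\<epsilon>/2) * f2 x"
  shows "L2norm r1 \<le> \<epsilon> * (2 * \<beta> / \<alpha>\<^sup>2 * L2norm f1 + 1 / \<alpha> * L2norm f2)"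
proof -
  have cG: "continuous_on {0..1} G" by (rule deriv_cont[OF dG])
  have cG1: "continuous_on {0..1} G1" by (rule deriv_cont[OF dG1])
  have cG2': "continuous_on {0..1} G2" using cG2 continuous_on_subset by blast
  have cr: "continuous_on {0..1} r" by (rule deriv_cont[OF dr])
  have cr1: "continuous_on {0..1} r1" by (rule deriv_cont[OF dr1])
  have cr2': "continuous_on {0..1} r2" using cr2 continuous_on_subset by blast
  have ch: "continuous_on {0..1} h" by (rule deriv_cont[OF dh])
  have ch1': "continuous_on {0..1} h1" using ch1 continuous_on_subset by blast
  have cf1: "continuous_on {0..1} f1" by (rule deriv_cont[OF df])
  have cf2': "continuous_on {0..1} f2" using cf2 continuous_on_subset by blast
  note cs = cG cG1 cG2' cr cr1 cr2' ch ch1' cf1 cf2'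
  have beta0: "\<beta> \<ge> 0" using bet[of 0] by auto
  define R where "R = L2norm r"
  define X where "X = L2norm r1"
  define F1 where "F1 = L2norm f1"
  define F2 where "F2 = L2norm f2"
  define Rsq where "Rsq = integral {0..1} (\<lambda>x. (r x)\<^sup>2)"
  define Xsq where "Xsq = integral {0..1} (\<lambda>x. (r1 x)\<^sup>2)"
  have iRsq: "((\<lambda>x. (r x)\<^sup>2) has_integral Rsq) {0..1}"
    unfolding Rsq_def by (intro integrable_integral integrable_continuous_interval continuous_intros cs)
  have iXsq: "((\<lambda>x. (r1 x)\<^sup>2) has_integral Xsq) {0..1}"
    unfolding Xsq_def by (intro integrable_integral integrable_continuous_interval continuous_intros cs)
  have Rsq0: "Rsq \<ge> 0" by (rule has_integral_nonneg[OF iRsq]) auto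
  have Xsq0: "Xsq \<ge> 0" by (rule has_integral_nonneg[OF iXsq]) auto
  have RR: "R\<^sup>2 = Rsq" "R \<ge> 0" unfolding R_def L2norm_def Rsq_def[symmetric] using Rsq0 by auto
  have XX: "X\<^sup>2 = Xsq" "X \<ge> 0" unfolding X_def L2norm_def Xsq_def[symmetric] using Xsq0 by auto
  have F10: "F1 \<ge> 0" unfolding F1_def by (rule L2_nonneg)
  have F20: "F2 \<ge> 0" unfolding F2_def by (rule L2_nonneg)
  define \<Phi> where "\<Phi> x = \<epsilon>/2 * (G1 x * r x + G x * r1 x) - h x * r x + \<epsilon>/2 * f1 x" for x
  have d\<Phi>: "(\<Phi> has_real_derivative 0) (at x)" for x
  proof -
    have "(\<Phi> has_real_derivative (\<epsilon>/2 * ((G2 x * r x + G1 x * r1 x) + (G1 x * r1 x + G x * r2 x))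
       - (h1 x * r x + h x * r1 x) + \<epsilon>/2 * f2 x)) (at x)"
      unfolding \<Phi>_def[abs_def]
      by (intro DERIV_add DERIV_diff DERIV_cmult df) (auto intro!: derivative_eq_intros dG dG1 dr dr1 dh)
    moreover have "(\<epsilon>/2 * ((G2 x * r x + G1 x * r1 x) + (G1 x * r1 x + G x * r2 x))
       - (h1 x * r x + h x * r1 x) + \<epsilon>/2 * f2 x) = 0"
      using eq[of x] by (simp add: algebra_simps)
    ultimately show ?thesis by simp
  qed
  have \<Phi>c: "\<Phi> x = \<Phi> 0" for x using d\<Phi> by (intro DERIV_isconst_all) auto
  have ir0: "(r has_integral 0) {0..1}"
    using int0 integrable_integral[OF integrable_continuous_interval[OF cr]] by simp
  have i\<Phi>r: "((\<lambda>x. \<Phi> x * r x) has_integral 0) {0..1}"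
  proof -
    have "(\<lambda>x. \<Phi> x * r x) = (\<lambda>x. \<Phi> 0 * r x)" using \<Phi>c by metis
    thus ?thesis using has_integral_mult_right[OF ir0, of "\<Phi> 0"] by simp
  qed
  have iu: "((\<lambda>x. G1 x * (r x)\<^sup>2 + G x * (2 * r x * r1 x)) has_integral 0) {0..1}"
  proof (rule ftc_per[where u = "\<lambda>x. G x * (r x)\<^sup>2"])
    fix x show "((\<lambda>x. G x * (r x)\<^sup>2) has_real_derivative G1 x * (r x)\<^sup>2 + G x * (2 * r x * r1 x)) (at x)"
      by (rule derivative_eq_intros dG dr refl | simp)+
  qed (simp add: pG pr)
  define Q where "Q = integral {0..1} (\<lambda>x. (h x - \<epsilon> * G1 x / 4) * (r x)\<^sup>2)"
  have iQ: "((\<lambda>x. (h x - \<epsilon> * G1 x / 4) * (r x)\<^sup>2) has_integral Q) {0..1}"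
    unfolding Q_def by (intro integrable_integral integrable_continuous_interval continuous_intros cs) auto
  define B1 where "B1 = integral {0..1} (\<lambda>x. f1 x * r x)"
  have iB1: "((\<lambda>x. f1 x * r x) has_integral B1) {0..1}"
    unfolding B1_def by (intro integrable_integral integrable_continuous_interval continuous_intros cs)
  have "((\<lambda>x. \<epsilon>/4 * (G1 x * (r x)\<^sup>2 + G x * (2 * r x * r1 x)) - (h x - \<epsilon> * G1 x / 4) * (r x)\<^sup>2
      + \<epsilon>/2 * (f1 x * r x)) has_integral (\<epsilon>/4 * 0 - Q + \<epsilon>/2 * B1)) {0..1}"
    by (intro has_integral_add has_integral_diff has_integral_mult_right iu iQ iB1)
  moreover have "(\<lambda>x. \<epsilon>/4 * (G1 x * (r x)\<^sup>2 + G x * (2 * r x * r1 x)) - (h x - \<epsilon> * G1 x / 4) * (r x)\<^sup>2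
      + \<epsilon>/2 * (f1 x * r x)) = (\<lambda>x. \<Phi> x * r x)"
    by (rule ext) (simp add: \<Phi>_def algebra_simps power2_eq_square)
  ultimately have "0 = \<epsilon>/4 * 0 - Q + \<epsilon>/2 * B1" using i\<Phi>r has_integral_unique by metis
  hence QB1: "Q = \<epsilon>/2 * B1" by simp
  have "((\<lambda>x. 5 * \<alpha> / 6 * (r x)\<^sup>2) has_integral (5 * \<alpha> / 6 * Rsq)) {0..1}"
    by (intro has_integral_mult_right iRsq)
  hence Qlow: "5 * \<alpha> / 6 * Rsq \<le> Q"
  proof (rule has_integral_le[OF _ iQ])
    fix x :: real assume x: "x \<in> {0..1}"
    have "5 * \<alpha> / 6 \<le> h x - \<epsilon> * G1 x / 4" using hal[OF x] GM[OF x] by linarith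
    thus "5 * \<alpha> / 6 * (r x)\<^sup>2 \<le> (h x - \<epsilon> * G1 x / 4) * (r x)\<^sup>2"
      by (rule mult_right_mono) simp
  qed
  have B1le: "B1 \<le> F1 * R" unfolding B1_def F1_def R_def by (rule cs_int[OF cf1 cr])
  have Rle: "R \<le> 3 * \<epsilon> * F1 / (5 * \<alpha>)"
  proof (cases "R = 0")
    case True thus ?thesis using eps F10 alpha by simp
  next
    case False
    hence Rp: "R > 0" using RR by auto
    have "5 * \<alpha> / 6 * Rsq \<le> \<epsilon> / 2 * B1" using Qlow QB1 by simp
    also have "\<dots> \<le> \<epsilon> / 2 * (F1 * R)" using B1le eps by simp
    finally have "5 * \<alpha> / 6 * (R * R) \<le> \<epsilon> / 2 * (F1 * R)"
      using RR(1) by (simp only: power2_eq_square)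
    hence "(5 * \<alpha> / 6 * R) * R \<le> (\<epsilon> / 2 * F1) * R" by (simp only: mult.assoc)
    hence "5 * \<alpha> / 6 * R \<le> \<epsilon> / 2 * F1" using Rp by (simp add: mult_le_cancel_right)
    thus ?thesis using alpha by (simp add: field_simps)
  qed
  have iv: "((\<lambda>x. G1 x * (r1 x)\<^sup>2 + G x * (2 * r1 x * r2 x)) has_integral 0) {0..1}"
  proof (rule ftc_per[where u = "\<lambda>x. G x * (r1 x)\<^sup>2"])
    fix x show "((\<lambda>x. G x * (r1 x)\<^sup>2) has_real_derivative G1 x * (r1 x)\<^sup>2 + G x * (2 * r1 x * r2 x)) (at x)"
      by (rule derivative_eq_intros dG dr1 refl | simp)+
  qed (simp add: pG pr1)
  define w where "w x = \<epsilon>/2 * G2 x - h1 x" for x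
  have cw: "continuous_on {0..1} w" unfolding w_def[abs_def] by (intro continuous_intros cs)
  define Q2 where "Q2 = integral {0..1} (\<lambda>x. (h x - 3 * \<epsilon> * G1 x / 4) * (r1 x)\<^sup>2)"
  have iQ2: "((\<lambda>x. (h x - 3 * \<epsilon> * G1 x / 4) * (r1 x)\<^sup>2) has_integral Q2) {0..1}"
    unfolding Q2_def by (intro integrable_integral integrable_continuous_interval continuous_intros cs) auto
  define B2 where "B2 = integral {0..1} (\<lambda>x. f2 x * r1 x)"
  have iB2: "((\<lambda>x. f2 x * r1 x) has_integral B2) {0..1}"
    unfolding B2_def by (intro integrable_integral integrable_continuous_interval continuous_intros cs)
  define B3 where "B3 = integral {0..1} (\<lambda>x. (w x * r x) * r1 x)"
  have iB3: "((\<lambda>x. (w x * r x) * r1 x) has_integral B3) {0..1}"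
    unfolding B3_def by (intro integrable_integral integrable_continuous_interval continuous_intros cs cw)
  have int2: "((\<lambda>x. \<epsilon>/4 * (G1 x * (r1 x)\<^sup>2 + G x * (2 * r1 x * r2 x)) + (w x * r x) * r1 x
      + \<epsilon>/2 * (f2 x * r1 x)) has_integral (\<epsilon>/4 * 0 + B3 + \<epsilon>/2 * B2)) {0..1}"
    by (intro has_integral_add has_integral_mult_right iv iB3 iB2)
  have fun2: "(\<lambda>x. \<epsilon>/4 * (G1 x * (r1 x)\<^sup>2 + G x * (2 * r1 x * r2 x)) + (w x * r x) * r1 x
      + \<epsilon>/2 * (f2 x * r1 x)) = (\<lambda>x. (h x - 3 * \<epsilon> * G1 x / 4) * (r1 x)\<^sup>2)"
  proof (rule ext)
    fix x
    have "(\<epsilon>/4 * (G1 x * (r1 x)\<^sup>2 + G x * (2 * r1 x * r2 x)) + (w x * r x) * r1 x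
      + \<epsilon>/2 * (f2 x * r1 x)) - (h x - 3 * \<epsilon> * G1 x / 4) * (r1 x)\<^sup>2
      = ((\<epsilon>/2) * (G2 x * r x + 2 * G1 x * r1 x + G x * r2 x) - (h1 x * r x + h x * r1 x)
          - (- (\<epsilon>/2) * f2 x)) * r1 x"
      unfolding w_def by (simp add: algebra_simps power2_eq_square)
    also have "\<dots> = 0" using eq[of x] by simp
    finally show "(\<epsilon>/4 * (G1 x * (r1 x)\<^sup>2 + G x * (2 * r1 x * r2 x)) + (w x * r x) * r1 x
      + \<epsilon>/2 * (f2 x * r1 x)) = (h x - 3 * \<epsilon> * G1 x / 4) * (r1 x)\<^sup>2" by simp
  qed
  have "((\<lambda>x. (h x - 3 * \<epsilon> * G1 x / 4) * (r1 x)\<^sup>2) has_integral (\<epsilon>/4 * 0 + B3 + \<epsilon>/2 * B2)) {0..1}"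
    using int2 unfolding fun2 .
  from has_integral_unique[OF iQ2 this] have Q2eq: "Q2 = B3 + \<epsilon>/2 * B2" by simp
  have "((\<lambda>x. \<alpha> / 2 * (r1 x)\<^sup>2) has_integral (\<alpha> / 2 * Xsq)) {0..1}"
    by (intro has_integral_mult_right iXsq)
  hence Q2low: "\<alpha> / 2 * Xsq \<le> Q2"
  proof (rule has_integral_le[OF _ iQ2])
    fix x :: real assume x: "x \<in> {0..1}"
    have "\<alpha> / 2 \<le> h x - 3 * \<epsilon> * G1 x / 4" using hal[OF x] GM[OF x] by linarith
    thus "\<alpha> / 2 * (r1 x)\<^sup>2 \<le> (h x - 3 * \<epsilon> * G1 x / 4) * (r1 x)\<^sup>2"
      by (rule mult_right_mono) simp
  qed
  have B2le: "B2 \<le> F2 * X" unfolding B2_def F2_def X_def by (rule cs_int[OF cf2' cr1])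
  have wr: "L2norm (\<lambda>x. w x * r x) \<le> \<beta> * R"
  proof -
    have "integral {0..1} (\<lambda>x. (w x * r x)\<^sup>2) \<le> integral {0..1} (\<lambda>x. \<beta>\<^sup>2 * (r x)\<^sup>2)"
    proof (rule integral_le)
      fix x :: real assume x: "x \<in> {0..1}"
      have "(w x)\<^sup>2 \<le> \<beta>\<^sup>2" using bet[OF x] unfolding w_def
        by (metis abs_ge_zero abs_le_square_iff abs_of_nonneg beta0 order_trans power2_abs)
      thus "(w x * r x)\<^sup>2 \<le> \<beta>\<^sup>2 * (r x)\<^sup>2"
        by (simp add: power_mult_distrib mult_right_mono)
    qed (intro integrable_continuous_interval continuous_intros cs cw)+
    also have "\<dots> = \<beta>\<^sup>2 * Rsq" by (rule integral_unique[OF has_integral_mult_right[OF iRsq]])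
    finally have "sqrt (integral {0..1} (\<lambda>x. (w x * r x)\<^sup>2)) \<le> sqrt (\<beta>\<^sup>2 * Rsq)"
      by (rule real_sqrt_le_mono)
    also have "\<dots> = \<beta> * R" using RR(2) beta0 by (simp add: real_sqrt_mult RR(1)[symmetric])
    finally show ?thesis unfolding L2norm_def .
  qed
  have "B3 \<le> L2norm (\<lambda>x. w x * r x) * X" unfolding B3_def X_def
    by (rule cs_int) (intro continuous_intros cs cw)+
  also have "\<dots> \<le> \<beta> * R * X" using wr XX by (simp add: mult_right_mono)
  finally have B3le: "B3 \<le> \<beta> * R * X" .
  have Xle: "X \<le> (2 * \<beta> * R + \<epsilon> * F2) / \<alpha>"
  proof (cases "X = 0")
    case True thus ?thesis using eps F20 alpha beta0 RR by simp
  next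
    case False
    hence Xp: "X > 0" using XX by auto
    have "\<alpha> / 2 * Xsq \<le> \<beta> * R * X + \<epsilon> / 2 * B2" using Q2low Q2eq B3le by simp
    also have "\<dots> \<le> \<beta> * R * X + \<epsilon> / 2 * (F2 * X)" using B2le eps by simp
    finally have "\<alpha> / 2 * (X * X) \<le> \<beta> * R * X + \<epsilon> / 2 * (F2 * X)"
      using XX(1) by (simp only: power2_eq_square)
    hence "(\<alpha> / 2 * X) * X \<le> (\<beta> * R + \<epsilon> / 2 * F2) * X" by (simp add: algebra_simps)
    hence "\<alpha> / 2 * X \<le> \<beta> * R + \<epsilon> / 2 * F2" using Xp by (simp add: mult_le_cancel_right)
    thus ?thesis using alpha by (simp add: field_simps)
  qed
  have "2 * \<beta> * R \<le> 2 * \<beta> * (3 * \<epsilon> * F1 / (5 * \<alpha>))"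
    using Rle beta0 by (intro mult_left_mono) auto
  also have "\<dots> \<le> 2 * \<beta> * (\<epsilon> * F1 / \<alpha>)"
    using beta0 eps F10 alpha by (intro mult_left_mono) (auto simp: field_simps)
  finally have "X \<le> (2 * \<beta> * (\<epsilon> * F1 / \<alpha>) + \<epsilon> * F2) / \<alpha>"
    using Xle alpha by (smt (verit) divide_right_mono)
  also have "\<dots> = \<epsilon> * (2 * \<beta> / \<alpha>\<^sup>2 * F1 + 1 / \<alpha> * F2)"
    using alpha by (simp add: field_simps power2_eq_square)
  finally show ?thesis unfolding X_def F1_def F2_def .
qed

lemma c2D:
  assumes "C2_circle f"
  shows "\<And>x. (f has_real_derivative deriv f x) (at x)"
    and "\<And>x. (deriv f has_real_derivative deriv (deriv f) x) (at x)"
    and "continuous_on UNIV (deriv (deriv f))" and "f 1 = f 0" and "deriv f 1 = deriv f 0"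
proof -
  show d1: "\<And>x. (f has_real_derivative deriv f x) (at x)"
    using assms unfolding C2_circle_def by (simp add: DERIV_deriv_iff_real_differentiable)
  show "\<And>x. (deriv f has_real_derivative deriv (deriv f) x) (at x)"
    using assms unfolding C2_circle_def by (simp add: DERIV_deriv_iff_real_differentiable)
  show "continuous_on UNIV (deriv (deriv f))" using assms unfolding C2_circle_def by simp
  have per: "\<And>x. f (x + 1) = f x" using assms unfolding C2_circle_def periodic1_def by simp
  show "f 1 = f 0" using per[of 0] by simp
  have "(f has_real_derivative deriv f 1) (at (0 + 1))" using d1[of 1] by simp
  hence "((\<lambda>x. f (x + 1)) has_real_derivative deriv f 1) (at 0)" by (simp only: DERIV_shift)
  hence "(f has_real_derivative deriv f 1) (at 0)" using per by simp
  thus "deriv f 1 = deriv f 0" using d1[of 0] DERIV_unique by blast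
qed

lemma prod_derivs:
  assumes df: "\<And>x. (f has_real_derivative f1 x) (at x)" and df1: "\<And>x. (f1 has_real_derivative f2 x) (at x)"
    and dg: "\<And>x. (g has_real_derivative g1 x) (at x)" and dg1: "\<And>x. (g1 has_real_derivative g2 x) (at x)"
  shows "deriv (\<lambda>y. f y * g y) = (\<lambda>x. f1 x * g x + f x * g1 x)"
    and "\<And>x. (deriv (\<lambda>y. f y * g y) has_real_derivative (f2 x * g x + 2 * f1 x * g1 x + f x * g2 x)) (at x)"
    and "deriv (deriv (\<lambda>y. f y * g y)) = (\<lambda>x. f2 x * g x + 2 * f1 x * g1 x + f x * g2 x)"
proof -
  show e1: "deriv (\<lambda>y. f y * g y) = (\<lambda>x. f1 x * g x + f x * g1 x)"
  proof
    fix x show "deriv (\<lambda>y. f y * g y) x = f1 x * g x + f x * g1 x"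
      by (rule DERIV_imp_deriv) (rule derivative_eq_intros df dg refl | simp)+
  qed
  show d2: "\<And>x. (deriv (\<lambda>y. f y * g y) has_real_derivative (f2 x * g x + 2 * f1 x * g1 x + f x * g2 x)) (at x)"
    unfolding e1 by (rule derivative_eq_intros df dg df1 dg1 refl | simp)+
  show "deriv (deriv (\<lambda>y. f y * g y)) = (\<lambda>x. f2 x * g x + 2 * f1 x * g1 x + f x * g2 x)"
    using d2 DERIV_imp_deriv by blast
qed

lemma sup_le: "continuous_on {0..1} (f :: real \<Rightarrow> real) \<Longrightarrow> x \<in> {0..1} \<Longrightarrow> f x \<le> (SUP y\<in>{0..1}. f y)"
  by (intro cSUP_upper bounded_imp_bdd_above compact_imp_bounded compact_continuous_image) auto

lemma inf_att:
  assumes "continuous_on {0..1} (f :: real \<Rightarrow> real)"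
  shows "\<exists>x0\<in>{0..1}. (INF y\<in>{0..1}. f y) = f x0 \<and> (\<forall>x\<in>{0..1}. f x0 \<le> f x)"
proof -
  obtain x0 where x0: "x0 \<in> {0..1}" "\<forall>y\<in>{0..1}. f x0 \<le> f y"
    using continuous_attains_inf[OF compact_Icc _ assms] by auto
  have "(INF y\<in>{0..1}. f y) = f x0"
  proof (rule antisym)
    show "(INF y\<in>{0..1}. f y) \<le> f x0" using x0 by (intro cINF_lower bdd_belowI2[of _ "f x0"]) auto
    show "f x0 \<le> (INF y\<in>{0..1}. f y)" using x0 by (intro cINF_greatest) auto
  qed
  thus ?thesis using x0 by blast
qed

theorem mainTheorem4:
  fixes h \<Gamma> \<rho>0 :: "real \<Rightarrow> real" and c :: real
  assumes "C2_circle h" and "C2_circle \<Gamma>" and "C2_circle \<rho>0"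
    and "\<forall>x. h x > 0" and "\<forall>x. \<Gamma> x > 0"
    and "c > 0" and "\<forall>x. \<rho>0 x = c / h x"
  shows
   "(\<exists>\<epsilon>0 > 0. \<exists>C. \<forall>\<epsilon> r. 0 < \<epsilon> \<and> \<epsilon> < \<epsilon>0 \<and> C2_circle r
        \<and> (\<forall>x. (\<epsilon>/2) * deriv (deriv (\<lambda>y. \<Gamma> y * r y)) x - deriv (\<lambda>y. h y * r y) x
               = - (\<epsilon>/2) * deriv (deriv (\<lambda>y. \<Gamma> y * \<rho>0 y)) x)
        \<and> integral {0..1} r = 0
        \<longrightarrow> L2norm (deriv r) \<le> C * \<epsilon>)
    \<and> (let \<alpha> = (INF x\<in>{0..1}. h x);
           M = (SUP x\<in>{0..1}. deriv \<Gamma> x);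
           \<Gamma>const = (\<exists>k. \<forall>x. \<Gamma> x = k);
           \<beta> = (if \<Gamma>const then (SUP x\<in>{0..1}. \<bar>deriv h x\<bar>)
                else (SUP x\<in>{0..1}. \<bar>deriv h x\<bar> + \<alpha> / (3 * M) * \<bar>deriv (deriv \<Gamma>) x\<bar>))
       in \<forall>\<epsilon> r. 0 < \<epsilon> \<and> (\<Gamma>const \<or> \<epsilon> < 2 * \<alpha> / (3 * M)) \<and> C2_circle r
        \<and> (\<forall>x. (\<epsilon>/2) * deriv (deriv (\<lambda>y. \<Gamma> y * r y)) x - deriv (\<lambda>y. h y * r y) x
               = - (\<epsilon>/2) * deriv (deriv (\<lambda>y. \<Gamma> y * \<rho>0 y)) x)
        \<and> integral {0..1} r = 0
        \<longrightarrow> L2norm (deriv r) \<le> \<epsilon> * (2 * \<beta> / \<alpha>\<^sup>2 * L2norm (deriv (\<lambda>y. \<Gamma> y * \<rho>0 y))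
                 + 1 / \<alpha> * L2norm (deriv (deriv (\<lambda>y. \<Gamma> y * \<rho>0 y)))))"
proof -
  note hD = c2D[OF assms(1)] and GD = c2D[OF assms(2)] and pD = c2D[OF assms(3)]
  define f1 where "f1 = deriv (\<lambda>y. \<Gamma> y * \<rho>0 y)"
  define f2 where "f2 = deriv f1"
  note PG = prod_derivs[OF GD(1) GD(2) pD(1) pD(2)]
  have df: "(f1 has_real_derivative f2 x) (at x)" for x
  proof -
    have "(f1 has_real_derivative (deriv (deriv \<Gamma>) x * \<rho>0 x + 2 * deriv \<Gamma> x * deriv \<rho>0 x + \<Gamma> x * deriv (deriv \<rho>0) x)) (at x)"
      unfolding f1_def by (rule PG(2))
    moreover have "f2 x = deriv (deriv \<Gamma>) x * \<rho>0 x + 2 * deriv \<Gamma> x * deriv \<rho>0 x + \<Gamma> x * deriv (deriv \<rho>0) x"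
      unfolding f2_def f1_def PG(3) by simp
    ultimately show ?thesis by simp
  qed
  have cf2: "continuous_on UNIV f2"
  proof -
    have "f2 = (\<lambda>x. deriv (deriv \<Gamma>) x * \<rho>0 x + 2 * deriv \<Gamma> x * deriv \<rho>0 x + \<Gamma> x * deriv (deriv \<rho>0) x)"
      unfolding f2_def f1_def PG(3) by simp
    thus ?thesis using deriv_cont[OF GD(1)] deriv_cont[OF GD(2)] GD(3) deriv_cont[OF pD(1)] deriv_cont[OF pD(2)] pD(3)
      by (auto intro!: continuous_intros)
  qed
  have ch1: "continuous_on UNIV (deriv h)" by (rule deriv_cont[OF hD(2)])
  define \<alpha> where "\<alpha> = (INF x\<in>{0..1}. h x)"
  obtain x0 where x0: "x0 \<in> {0..1}" "\<alpha> = h x0" "\<forall>x\<in>{0..1}. h x0 \<le> h x"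
    using inf_att[OF deriv_cont[OF hD(1)]] unfolding \<alpha>_def by blast
  have alpha: "\<alpha> > 0" using x0 assms(4) by auto
  have hal: "\<And>x. x \<in> {0..1} \<Longrightarrow> \<alpha> \<le> h x" using x0 by auto
  have key: "L2norm (deriv r) \<le> \<epsilon> * (2 * \<beta> / \<alpha>\<^sup>2 * L2norm f1 + 1 / \<alpha> * L2norm f2)"
    if e: "0 < \<epsilon>" and r: "C2_circle r"
      and eqn: "\<forall>x. (\<epsilon>/2) * deriv (deriv (\<lambda>y. \<Gamma> y * r y)) x - deriv (\<lambda>y. h y * r y) x
               = - (\<epsilon>/2) * deriv (deriv (\<lambda>y. \<Gamma> y * \<rho>0 y)) x"
      and i0: "integral {0..1} r = 0"
      and GM: "\<And>x. x \<in> {0..1} \<Longrightarrow> \<epsilon> * deriv \<Gamma> x \<le> 2 * \<alpha> / 3"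
      and bet: "\<And>x. x \<in> {0..1} \<Longrightarrow> \<bar>\<epsilon>/2 * deriv (deriv \<Gamma>) x - deriv h x\<bar> \<le> \<beta>"
    for \<epsilon> r \<beta>
  proof -
    note rD = c2D[OF r]
    note PGr = prod_derivs[OF GD(1) GD(2) rD(1) rD(2)]
    note Phr = prod_derivs[OF hD(1) hD(2) rD(1) rD(2)]
    show ?thesis
    proof (rule core[OF GD(1) GD(2) GD(3) rD(1) rD(2) rD(3) hD(1) ch1 df cf2 GD(4) rD(4) rD(5) e alpha hal GM bet i0])
      fix x
      show "\<epsilon> / 2 * (deriv (deriv \<Gamma>) x * r x + 2 * deriv \<Gamma> x * deriv r x + \<Gamma> x * deriv (deriv r) x) -
         (deriv h x * r x + h x * deriv r x) = - (\<epsilon> / 2) * f2 x"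
        using eqn[rule_format, of x] unfolding PGr(3) Phr(1) f2_def f1_def by simp
    qed
  qed
  define M where "M = (SUP x\<in>{0..1}. deriv \<Gamma> x)"
  have G1M: "\<And>x. x \<in> {0..1} \<Longrightarrow> deriv \<Gamma> x \<le> M"
    unfolding M_def using sup_le[OF deriv_cont[OF GD(2)]] by blast
  have part1: "\<exists>\<epsilon>0 > 0. \<exists>C. \<forall>\<epsilon> r. 0 < \<epsilon> \<and> \<epsilon> < \<epsilon>0 \<and> C2_circle r
        \<and> (\<forall>x. (\<epsilon>/2) * deriv (deriv (\<lambda>y. \<Gamma> y * r y)) x - deriv (\<lambda>y. h y * r y) x
               = - (\<epsilon>/2) * deriv (deriv (\<lambda>y. \<Gamma> y * \<rho>0 y)) x)
        \<and> integral {0..1} r = 0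
        \<longrightarrow> L2norm (deriv r) \<le> C * \<epsilon>"
  proof -
    define M' where "M' = max M 1"
    have M'p: "M' > 0" unfolding M'_def by simp
    define \<beta>' where "\<beta>' = (SUP x\<in>{0..1}. \<bar>deriv h x\<bar> + \<alpha> / (3 * M') * \<bar>deriv (deriv \<Gamma>) x\<bar>)"
    have bd: "\<bar>deriv h x\<bar> + \<alpha> / (3 * M') * \<bar>deriv (deriv \<Gamma>) x\<bar> \<le> \<beta>'" if "x \<in> {0..1}" for x
      unfolding \<beta>'_def using ch1 GD(3) M'p
      by (intro sup_le that) (auto intro!: continuous_intros elim: continuous_on_subset)
    have "\<forall>\<epsilon> r. 0 < \<epsilon> \<and> \<epsilon> < 2 * \<alpha> / (3 * M') \<and> C2_circle r
        \<and> (\<forall>x. (\<epsilon>/2) * deriv (deriv (\<lambda>y. \<Gamma> y * r y)) x - deriv (\<lambda>y. h y * r y) x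
               = - (\<epsilon>/2) * deriv (deriv (\<lambda>y. \<Gamma> y * \<rho>0 y)) x)
        \<and> integral {0..1} r = 0
        \<longrightarrow> L2norm (deriv r) \<le> (2 * \<beta>' / \<alpha>\<^sup>2 * L2norm f1 + 1 / \<alpha> * L2norm f2) * \<epsilon>"
    proof (intro allI impI)
      fix \<epsilon> r
      assume H: "0 < \<epsilon> \<and> \<epsilon> < 2 * \<alpha> / (3 * M') \<and> C2_circle r
        \<and> (\<forall>x. (\<epsilon>/2) * deriv (deriv (\<lambda>y. \<Gamma> y * r y)) x - deriv (\<lambda>y. h y * r y) x
               = - (\<epsilon>/2) * deriv (deriv (\<lambda>y. \<Gamma> y * \<rho>0 y)) x)
        \<and> integral {0..1} r = 0"
      have eM: "\<epsilon> * M' < 2 * \<alpha> / 3" using H M'p by (simp add: field_simps)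
      have "L2norm (deriv r) \<le> \<epsilon> * (2 * \<beta>' / \<alpha>\<^sup>2 * L2norm f1 + 1 / \<alpha> * L2norm f2)"
      proof (rule key)
        show "0 < \<epsilon>" "C2_circle r" "integral {0..1} r = 0" using H by auto
        show "\<forall>x. (\<epsilon>/2) * deriv (deriv (\<lambda>y. \<Gamma> y * r y)) x - deriv (\<lambda>y. h y * r y) x
               = - (\<epsilon>/2) * deriv (deriv (\<lambda>y. \<Gamma> y * \<rho>0 y)) x" using H by blast
        fix x :: real assume x: "x \<in> {0..1}"
        have "\<epsilon> * deriv \<Gamma> x \<le> \<epsilon> * M'" using G1M[OF x] H unfolding M'_def
          by (intro mult_left_mono) auto
        thus "\<epsilon> * deriv \<Gamma> x \<le> 2 * \<alpha> / 3" using eM by linarith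
        have "\<epsilon>/2 \<le> \<alpha> / (3 * M')" using eM M'p by (simp add: field_simps)
        hence "\<epsilon>/2 * \<bar>deriv (deriv \<Gamma>) x\<bar> \<le> \<alpha> / (3 * M') * \<bar>deriv (deriv \<Gamma>) x\<bar>"
          by (rule mult_right_mono) simp
        moreover have "\<bar>\<epsilon>/2 * deriv (deriv \<Gamma>) x - deriv h x\<bar> \<le> \<bar>deriv h x\<bar> + \<epsilon>/2 * \<bar>deriv (deriv \<Gamma>) x\<bar>"
        proof -
          have "\<bar>\<epsilon>/2 * deriv (deriv \<Gamma>) x\<bar> = \<epsilon>/2 * \<bar>deriv (deriv \<Gamma>) x\<bar>"
            using H by (simp add: abs_mult)
          thus ?thesis using abs_triangle_ineq4[of "\<epsilon>/2 * deriv (deriv \<Gamma>) x" "deriv h x"] by linarith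
        qed
        ultimately show "\<bar>\<epsilon>/2 * deriv (deriv \<Gamma>) x - deriv h x\<bar> \<le> \<beta>'" using bd[OF x] by linarith
      qed
      thus "L2norm (deriv r) \<le> (2 * \<beta>' / \<alpha>\<^sup>2 * L2norm f1 + 1 / \<alpha> * L2norm f2) * \<epsilon>"
        by (simp add: mult.commute)
    qed
    moreover have "0 < 2 * \<alpha> / (3 * M')" using alpha M'p by simp
    ultimately show ?thesis by blast
  qed
  define \<Gamma>c where "\<Gamma>c = (\<exists>k. \<forall>x. \<Gamma> x = k)"
  define \<beta> where "\<beta> = (if \<Gamma>c then (SUP x\<in>{0..1}. \<bar>deriv h x\<bar>)
                else (SUP x\<in>{0..1}. \<bar>deriv h x\<bar> + \<alpha> / (3 * M) * \<bar>deriv (deriv \<Gamma>) x\<bar>))"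
  have part2: "\<forall>\<epsilon> r. 0 < \<epsilon> \<and> (\<Gamma>c \<or> \<epsilon> < 2 * \<alpha> / (3 * M)) \<and> C2_circle r
        \<and> (\<forall>x. (\<epsilon>/2) * deriv (deriv (\<lambda>y. \<Gamma> y * r y)) x - deriv (\<lambda>y. h y * r y) x
               = - (\<epsilon>/2) * deriv (deriv (\<lambda>y. \<Gamma> y * \<rho>0 y)) x)
        \<and> integral {0..1} r = 0
        \<longrightarrow> L2norm (deriv r) \<le> \<epsilon> * (2 * \<beta> / \<alpha>\<^sup>2 * L2norm f1 + 1 / \<alpha> * L2norm f2)"
  proof (intro allI impI)
    fix \<epsilon> r
    assume H: "0 < \<epsilon> \<and> (\<Gamma>c \<or> \<epsilon> < 2 * \<alpha> / (3 * M)) \<and> C2_circle r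
        \<and> (\<forall>x. (\<epsilon>/2) * deriv (deriv (\<lambda>y. \<Gamma> y * r y)) x - deriv (\<lambda>y. h y * r y) x
               = - (\<epsilon>/2) * deriv (deriv (\<lambda>y. \<Gamma> y * \<rho>0 y)) x)
        \<and> integral {0..1} r = 0"
    show "L2norm (deriv r) \<le> \<epsilon> * (2 * \<beta> / \<alpha>\<^sup>2 * L2norm f1 + 1 / \<alpha> * L2norm f2)"
    proof (rule key)
      show "0 < \<epsilon>" "C2_circle r" "integral {0..1} r = 0" using H by auto
      show "\<forall>x. (\<epsilon>/2) * deriv (deriv (\<lambda>y. \<Gamma> y * r y)) x - deriv (\<lambda>y. h y * r y) x
             = - (\<epsilon>/2) * deriv (deriv (\<lambda>y. \<Gamma> y * \<rho>0 y)) x" using H by blast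
    next
      fix x :: real assume x: "x \<in> {0..1}"
      have "\<epsilon> * deriv \<Gamma> x \<le> 2 * \<alpha> / 3 \<and> \<bar>\<epsilon>/2 * deriv (deriv \<Gamma>) x - deriv h x\<bar> \<le> \<beta>"
      proof (cases \<Gamma>c)
        case True
        then obtain k where k: "\<And>x. \<Gamma> x = k" unfolding \<Gamma>c_def by blast
        have G10: "deriv \<Gamma> y = 0" for y
        proof -
          have "\<Gamma> = (\<lambda>_. k)" by (rule ext) (rule k)
          hence "(\<Gamma> has_real_derivative 0) (at y)" by simp
          thus ?thesis using GD(1)[of y] DERIV_unique by blast
        qed
        have G20: "deriv (deriv \<Gamma>) y = 0" for y
        proof -
          have "deriv \<Gamma> = (\<lambda>_. 0)" by (rule ext) (rule G10)
          hence "(deriv \<Gamma> has_real_derivative 0) (at y)" by simp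
          thus ?thesis using GD(2)[of y] DERIV_unique by blast
        qed
        have "\<bar>deriv h x\<bar> \<le> (SUP x\<in>{0..1}. \<bar>deriv h x\<bar>)"
          using ch1 by (intro sup_le x) (auto intro!: continuous_intros elim: continuous_on_subset)
        thus ?thesis using True alpha G10[of x] G20[of x] unfolding \<beta>_def by simp
      next
        case False
        hence eM0: "\<epsilon> < 2 * \<alpha> / (3 * M)" using H by blast
        have Mp: "M > 0"
        proof (rule ccontr)
          assume "\<not> M > 0"
          hence "2 * \<alpha> / (3 * M) \<le> 0" using alpha by (simp add: divide_nonneg_nonpos)
          thus False using eM0 H by linarith
        qed
        have eM: "\<epsilon> * M < 2 * \<alpha> / 3" using eM0 Mp by (simp add: field_simps)
        have bd: "\<bar>deriv h x\<bar> + \<alpha> / (3 * M) * \<bar>deriv (deriv \<Gamma>) x\<bar>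
            \<le> (SUP x\<in>{0..1}. \<bar>deriv h x\<bar> + \<alpha> / (3 * M) * \<bar>deriv (deriv \<Gamma>) x\<bar>)"
          using ch1 GD(3) Mp
          by (intro sup_le x) (auto intro!: continuous_intros elim: continuous_on_subset)
        have "\<epsilon> * deriv \<Gamma> x \<le> \<epsilon> * M" using G1M[OF x] H by (intro mult_left_mono) auto
        hence A: "\<epsilon> * deriv \<Gamma> x \<le> 2 * \<alpha> / 3" using eM by linarith
        have "\<epsilon>/2 \<le> \<alpha> / (3 * M)" using eM Mp by (simp add: field_simps)
        hence "\<epsilon>/2 * \<bar>deriv (deriv \<Gamma>) x\<bar> \<le> \<alpha> / (3 * M) * \<bar>deriv (deriv \<Gamma>) x\<bar>"
          by (rule mult_right_mono) simp
        moreover have "\<bar>\<epsilon>/2 * deriv (deriv \<Gamma>) x - deriv h x\<bar> \<le> \<bar>deriv h x\<bar> + \<epsilon>/2 * \<bar>deriv (deriv \<Gamma>) x\<bar>"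
        proof -
          have "\<bar>\<epsilon>/2 * deriv (deriv \<Gamma>) x\<bar> = \<epsilon>/2 * \<bar>deriv (deriv \<Gamma>) x\<bar>"
            using H by (simp add: abs_mult)
          thus ?thesis using abs_triangle_ineq4[of "\<epsilon>/2 * deriv (deriv \<Gamma>) x" "deriv h x"] by linarith
        qed
        ultimately have "\<bar>\<epsilon>/2 * deriv (deriv \<Gamma>) x - deriv h x\<bar> \<le> \<beta>"
          using bd False unfolding \<beta>_def by simp
        with A show ?thesis by blast
      qed
      thus "\<epsilon> * deriv \<Gamma> x \<le> 2 * \<alpha> / 3" "\<bar>\<epsilon>/2 * deriv (deriv \<Gamma>) x - deriv h x\<bar> \<le> \<beta>" by auto
    qed
  qed
  show ?thesis
    unfolding Let_def
    using part1 part2 unfolding \<alpha>_def[symmetric] M_def[symmetric] \<Gamma>c_def[symmetric] \<beta>_def[symmetric]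
      f1_def[symmetric] f2_def[symmetric]
    by blast
qed

end
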